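(* For each $\eta\in(0,\pi/3)$, the convex hull $\mathrm{co}(V)$ is a polygon, where $V=\{b_0\}\cup\{z_k:k\ge0\}\cup\{w_k:k\ge1\}$.
   Context: For $\eta\in(0,\pi/3)$ let $a=\frac{e^{-i\eta}}{2\cos\eta}$, $c=\frac{1}{1-|a|^4}$, and for integers $k\ge0$ put $z_k=ca^{k+1}$, $w_k=1-c|a|^2a^k$, $b_k=a+c|a|^4a^k$. *)

theory Defs
  imports "HOL-Analysis.Analysis"
begin

definition aa :: "real \<Rightarrow> complex" where
  "aa \<eta> = cis (- \<eta>) / (2 * of_real (cos \<eta>))"

definition cc :: "real \<Rightarrow> real" where
  "cc \<eta> = 1 / (1 - norm (aa \<eta>) ^ 4)"

definition zz :: "real \<Rightarrow> nat \<Rightarrow> complex" where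
  "zz \<eta> k = of_real (cc \<eta>) * aa \<eta> ^ (k + 1)"

definition ww :: "real \<Rightarrow> nat \<Rightarrow> complex" where
  "ww \<eta> k = 1 - of_real (cc \<eta> * norm (aa \<eta>) ^ 2) * aa \<eta> ^ k"

definition bb :: "real \<Rightarrow> nat \<Rightarrow> complex" where
  "bb \<eta> k = aa \<eta> + of_real (cc \<eta> * norm (aa \<eta>) ^ 4) * aa \<eta> ^ k"

definition VV :: "real \<Rightarrow> complex set" where
  "VV \<eta> = {bb \<eta> 0} \<union> {zz \<eta> k | k. True} \<union> {ww \<eta> k | k. k \<ge> 1}"

end

theory Submission
  imports Defs
begin

lemma cball_in_hull:
  fixes S :: "complex set" and q p :: complex
  assumes fin: "finite S" and rho: "\<rho> > 0"
    and H: "\<And>u. u \<noteq> 0 \<Longrightarrow> \<exists>x\<in>S. inner u (x - q) \<ge> \<rho> * norm u"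
    and pq: "norm (p - q) \<le> \<rho>"
  shows "p \<in> convex hull S"
proof (rule ccontr)
  assume np: "p \<notin> convex hull S"
  have "closed (convex hull S)"
    using fin by (simp add: compact_convex_hull finite_imp_compact compact_imp_closed)
  then obtain a b where ab: "inner a p < b" "\<forall>x\<in>convex hull S. inner a x > b"
    using separating_hyperplane_closed_point[OF convex_convex_hull _ np] by blast
  have "S \<noteq> {}" using H[of 1] by auto
  then obtain x0 where "x0 \<in> S" by auto
  hence "x0 \<in> convex hull S" by (rule hull_inc)
  hence "inner a x0 > b" by (rule bspec[OF ab(2)])
  hence a0: "a \<noteq> 0" using ab(1) by auto
  obtain x where x: "x \<in> S" "inner (-a) (x - q) \<ge> \<rho> * norm (-a)"
    using H[of "-a"] a0 by auto
  have "x \<in> convex hull S" using x(1) by (rule hull_inc)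
  hence "inner a x > b" by (rule bspec[OF ab(2)])
  hence "inner (-a) (x - q) < inner (-a) (p - q)"
    using ab(1) by (simp add: inner_diff_right)
  also have "\<dots> \<le> norm (-a) * norm (p - q)" by (rule norm_cauchy_schwarz)
  also have "\<dots> \<le> norm (-a) * \<rho>" using pq by (simp add: mult_left_mono)
  finally show False using x(2) by (simp add: mult.commute)
qed

lemma aa_facts:
  assumes "0 < \<eta>" "\<eta> < pi / 3"
  shows "cos \<eta> > 1/2" "norm (aa \<eta>) = 1 / (2 * cos \<eta>)" "norm (aa \<eta>) < 1" "norm (aa \<eta>) > 0"
    "cc \<eta> > 0"
proof -
  have "cos \<eta> > cos (pi/3)"
    using assms by (intro cos_monotone_0_pi) auto
  thus c: "cos \<eta> > 1/2" by (simp add: cos_60)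
  show n: "norm (aa \<eta>) = 1 / (2 * cos \<eta>)"
    using c by (simp add: aa_def norm_divide)
  show "norm (aa \<eta>) < 1" "norm (aa \<eta>) > 0" using c n by auto
  hence "norm (aa \<eta>) ^ 4 < 1"
    by (simp add: power_less_one_iff)
  thus "cc \<eta> > 0" by (simp add: cc_def)
qed

lemma spiral:
  assumes e: "0 < \<eta>" "\<eta> < pi / 3" and u: "u \<noteq> 0"
  shows "\<exists>j \<le> nat \<lceil>(8*pi/3)/\<eta>\<rceil>. Re (cnj u * aa \<eta> ^ j) \<ge> norm u * norm (aa \<eta>) ^ j / 2"
proof -
  define \<phi> where "\<phi> = Arg u"
  have ph: "-pi < \<phi>" "\<phi> \<le> pi" unfolding \<phi>_def by (auto simp: mpi_less_Arg Arg_le_pi)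
  define t where "t = (5*pi/3 - \<phi>)/\<eta>"
  have t0: "t > 0" unfolding t_def using ph e by (auto intro!: divide_pos_pos)
  define j where "j = nat \<lceil>t\<rceil>"
  have j1: "real j \<ge> t" "real j < t + 1" unfolding j_def using t0 by linarith+
  have tle: "t \<le> (8*pi/3)/\<eta>" unfolding t_def using ph e by (intro divide_right_mono) auto
  have jN: "j \<le> nat \<lceil>(8*pi/3)/\<eta>\<rceil>" unfolding j_def
    by (intro nat_mono ceiling_mono tle)
  define \<theta> where "\<theta> = \<phi> + real j * \<eta>"
  have teta: "t * \<eta> = 5*pi/3 - \<phi>" unfolding t_def using e by simp
  have "t * \<eta> \<le> real j * \<eta>" using j1(1) e by (intro mult_right_mono) auto
  hence th1: "\<theta> \<ge> 5*pi/3" using teta unfolding \<theta>_def by linarith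
  have "real j * \<eta> < (t + 1) * \<eta>" using j1(2) e by (intro mult_strict_right_mono) auto
  hence th2: "\<theta> < 5*pi/3 + \<eta>" using teta unfolding \<theta>_def by (simp add: distrib_right)
  have "cos (2*pi - \<theta>) \<ge> cos (pi/3)"
    using th1 th2 e by (intro cos_monotone_0_pi_le) auto
  hence cth: "cos \<theta> \<ge> 1/2" by (simp add: cos_60)
  have cp: "cos \<eta> > 0" using aa_facts[OF e] by auto
  have uu: "u = of_real (norm u) * cis \<phi>" unfolding \<phi>_def
    by (metis rcis_cmod_Arg rcis_def)
  have aj: "aa \<eta> ^ j = of_real (norm (aa \<eta>) ^ j) * cis (- (real j * \<eta>))"
  proof -
    have "aa \<eta> ^ j = cis (-\<eta>) ^ j / (2 * of_real (cos \<eta>)) ^ j"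
      by (simp add: aa_def power_divide)
    also have "\<dots> = cis (- (real j * \<eta>)) / of_real ((2 * cos \<eta>) ^ j)"
      by (subst Complex.DeMoivre) simp
    also have "\<dots> = of_real (norm (aa \<eta>) ^ j) * cis (- (real j * \<eta>))"
      using cp by (simp add: aa_facts(2)[OF e] power_divide)
    finally show ?thesis .
  qed
  have "cnj u * aa \<eta> ^ j = of_real (norm u * norm (aa \<eta>) ^ j) * (cis (-\<phi>) * cis (- (real j * \<eta>)))"
    by (subst uu, subst aj) (simp add: cis_cnj)
  also have "\<dots> = of_real (norm u * norm (aa \<eta>) ^ j) * cis (- \<theta>)"
    unfolding \<theta>_def by (simp add: cis_mult)
  finally have "Re (cnj u * aa \<eta> ^ j) = norm u * norm (aa \<eta>) ^ j * cos \<theta>" by simp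
  also have "\<dots> \<ge> norm u * norm (aa \<eta>) ^ j * (1/2)"
    using cth by (intro mult_left_mono) auto
  finally show ?thesis using jN by (intro exI[of _ j]) auto
qed

lemma inner_cnj: "inner u (x::complex) = Re (cnj u * x)"
  by (simp add: inner_complex_def)

theorem lemma3p1:
  fixes \<eta> :: real
  assumes "0 < \<eta>" and "\<eta> < pi / 3"
  shows "polytope (convex hull (VV \<eta>))"
proof -
  note e = assms
  define N where "N = nat \<lceil>(8*pi/3)/\<eta>\<rceil>"
  define A where "A = norm (aa \<eta>)"
  define c where "c = cc \<eta>"
  have A0: "0 < A" "A < 1" and c0: "c > 0" using aa_facts[OF e] unfolding A_def c_def by auto
  have a0: "aa \<eta> \<noteq> 0" using A0 unfolding A_def by auto
  obtain M where M: "A ^ M < 1/2" using real_arch_pow_inv[of "1/2" A] A0 by auto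
  define K where "K = N + M + 2"
  define Sz where "Sz = zz \<eta> ` {..N}"
  define Sw where "Sw = ww \<eta> ` {1..N+1}"
  define F where "F = {bb \<eta> 0} \<union> zz \<eta> ` {..K} \<union> ww \<eta> ` {1..K}"
  have finF: "finite F" unfolding F_def by auto
  have FV: "F \<subseteq> VV \<eta>" unfolding F_def VV_def by auto
  have SzF: "Sz \<subseteq> F" unfolding Sz_def F_def K_def by auto
  have SwF: "Sw \<subseteq> F" unfolding Sw_def F_def K_def by auto
  have powmono: "A ^ m \<le> A ^ n" if "n \<le> m" for m n
    using that A0 by (intro power_decreasing) auto
  have Hz: "\<exists>x\<in>Sz. inner u (x - 0) \<ge> (c * A^(N+1) / 2) * norm u" if u: "u \<noteq> 0" for u
  proof -
    have "u * cnj (aa \<eta>) \<noteq> 0" using u a0 by auto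
    from spiral[OF e this] obtain j where j: "j \<le> N"
      "Re (cnj (u * cnj (aa \<eta>)) * aa \<eta> ^ j) \<ge> norm (u * cnj (aa \<eta>)) * A ^ j / 2"
      unfolding N_def A_def by auto
    have "inner u (zz \<eta> j - 0) = c * Re (cnj (u * cnj (aa \<eta>)) * aa \<eta> ^ j)"
      by (simp add: inner_cnj zz_def c_def algebra_simps)
    also have "\<dots> \<ge> c * (norm (u * cnj (aa \<eta>)) * A ^ j / 2)"
      using j(2) c0 by (intro mult_left_mono) auto
    finally have 1: "inner u (zz \<eta> j - 0) \<ge> c * (norm u * A ^ (j+1) / 2)"
      by (simp add: norm_mult A_def mult_ac)
    have "c * (norm u * A ^ (N+1) / 2) \<le> c * (norm u * A ^ (j+1) / 2)"
    proof -
      have "A ^ (N+1) \<le> A ^ (j+1)" using j(1) by (intro powmono) simp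
      hence "norm u * A ^ (N+1) \<le> norm u * A ^ (j+1)" by (rule mult_left_mono) simp
      thus ?thesis using c0 by (intro mult_left_mono) auto
    qed
    with 1 show ?thesis unfolding Sz_def using j(1)
      by (intro bexI[of _ "zz \<eta> j"]) (auto simp: mult_ac)
  qed
  have Hw: "\<exists>x\<in>Sw. inner u (x - 1) \<ge> (c * A^(N+3) / 2) * norm u" if u: "u \<noteq> 0" for u
  proof -
    have "- (u * cnj (aa \<eta>)) \<noteq> 0" using u a0 by auto
    from spiral[OF e this] obtain j where j: "j \<le> N"
      "Re (cnj (- (u * cnj (aa \<eta>))) * aa \<eta> ^ j) \<ge> norm (- (u * cnj (aa \<eta>))) * A ^ j / 2"
      unfolding N_def A_def by auto
    have "inner u (ww \<eta> (j+1) - 1) = (c * A^2) * Re (cnj (- (u * cnj (aa \<eta>))) * aa \<eta> ^ j)"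
      by (simp add: inner_cnj ww_def c_def A_def algebra_simps)
    also have "\<dots> \<ge> (c * A^2) * (norm (- (u * cnj (aa \<eta>))) * A ^ j / 2)"
      using j(2) c0 by (intro mult_left_mono) auto
    also have "(c * A^2) * (norm (- (u * cnj (aa \<eta>))) * A ^ j / 2) = c * (norm u * A ^ (j+3) / 2)"
      by (simp add: norm_mult A_def eval_nat_numeral algebra_simps)
    finally have 1: "inner u (ww \<eta> (j+1) - 1) \<ge> c * (norm u * A ^ (j+3) / 2)" .
    have "c * (norm u * A ^ (N+3) / 2) \<le> c * (norm u * A ^ (j+3) / 2)"
    proof -
      have "A ^ (N+3) \<le> A ^ (j+3)" using j(1) by (intro powmono) simp
      hence "norm u * A ^ (N+3) \<le> norm u * A ^ (j+3)" by (rule mult_left_mono) simp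
      thus ?thesis using c0 by (intro mult_left_mono) auto
    qed
    with 1 show ?thesis unfolding Sw_def using j(1)
      by (intro bexI[of _ "ww \<eta> (j+1)"]) (auto simp: mult_ac)
  qed
  have finSz: "finite Sz" and finSw: "finite Sw" unfolding Sz_def Sw_def by auto
  have rz: "c * A^(N+1) / 2 > 0" and rw: "c * A^(N+3) / 2 > 0" using c0 A0 by auto
  have c0': "cc \<eta> > 0" using c0 c_def by simp
  have pw: "c * A ^ (B+M) \<le> c * A^B / 2" for B
  proof -
    have "A^B * A^M \<le> A^B * (1/2)" using M A0 by (intro mult_left_mono) auto
    hence "A^(B+M) \<le> A^B / 2" by (simp add: power_add)
    thus ?thesis using c0 by (simp add: mult_left_mono)
  qed
  have zin: "zz \<eta> k \<in> convex hull F" for k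
  proof (cases "k \<le> K")
    case True
    hence "zz \<eta> k \<in> F" unfolding F_def by blast
    thus ?thesis by (rule hull_inc)
  next
    case False
    have "norm (zz \<eta> k - 0) = c * A ^ (k+1)"
      using c0' by (simp add: zz_def norm_mult norm_power A_def c_def)
    also have "\<dots> \<le> c * A ^ (N+1+M)" using False c0 K_def by (intro mult_left_mono powmono) auto
    also have "\<dots> \<le> c * A^(N+1) / 2" by (rule pw)
    finally have "zz \<eta> k \<in> convex hull Sz" by (intro cball_in_hull[OF finSz rz Hz])
    thus ?thesis by (rule subsetD[OF hull_mono[OF SzF]])
  qed
  have win: "ww \<eta> k \<in> convex hull F" if k: "k \<ge> 1" for k
  proof (cases "k \<le> K")
    case True
    hence "ww \<eta> k \<in> F" unfolding F_def using k by auto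
    thus ?thesis by (rule hull_inc)
  next
    case False
    have "ww \<eta> k - 1 = - (of_real (c * A^2) * aa \<eta> ^ k)"
      by (simp add: ww_def c_def A_def)
    hence "norm (ww \<eta> k - 1) = c * A^2 * A^k"
      using c0 by (simp add: norm_mult norm_power A_def)
    also have "\<dots> = c * A ^ (k+2)" by (simp add: power_add power2_eq_square)
    also have "\<dots> \<le> c * A ^ (N+3+M)" using False c0 K_def by (intro mult_left_mono powmono) auto
    also have "\<dots> \<le> c * A^(N+3) / 2" by (rule pw)
    finally have "ww \<eta> k \<in> convex hull Sw" by (intro cball_in_hull[OF finSw rw Hw])
    thus ?thesis by (rule subsetD[OF hull_mono[OF SwF]])
  qed
  have "bb \<eta> 0 \<in> convex hull F" unfolding F_def by (rule hull_inc) simp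
  hence VF: "VV \<eta> \<subseteq> convex hull F"
    unfolding VV_def using zin win by blast
  have "convex hull VV \<eta> \<subseteq> convex hull F"
    using hull_mono[OF VF, of convex] by (simp add: hull_hull)
  moreover have "convex hull F \<subseteq> convex hull VV \<eta>" by (rule hull_mono[OF FV])
  ultimately have "convex hull VV \<eta> = convex hull F" by blast
  thus ?thesis unfolding polytope_def using finF by blast
qed

end
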